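(* Let $p$ be a non-negative integer, $L,M$ non-zero complex numbers, and $\nu$ a complex number such that, if $\nu$ is an integer, then $\nu\le p$. Then the entire function $S_{\nu-2p-1,\nu}(L\mathrm{e}^{Mz})$ is not subnormal.
   Context: $J_\nu,Y_\nu$ are Bessel functions of the first and second kinds; $\psi=\Gamma'/\Gamma$; $(a)_k=a(a+1)\cdots(a+k-1)$; principal branch $-\pi<\arg\zeta<\pi$. The Lommel function $S_{\nu-2p-1,\nu}$ is defined by: if $\nu\notin\{1,\dots,p\}$, $S_{\nu-2p-1,\nu}(\zeta)=\sum_{m=0}^{p-1}\frac{(-1)^m\zeta^{\nu-2p+2m}}{2^{2m+2}(-p)_{m+1}(\nu-p)_{m+1}}+\frac{(-1)^pS_{\nu-1,\nu}(\zeta)}{2^{2p}p!(1-\nu)_p}$, where $S_{\nu-1,\nu}=\Gamma(\nu)[2^{\nu-1}J_\nu\log\zeta-2^{\nu-2}\pi Y_\nu-\frac{\zeta^\nu}{4}\sum_{m\ge0}\frac{(-1)^m(\zeta/2)^{2m}A(m)}{m!\Gamma(\nu+m+1)}]$, $A(m)=2\log2+\psi(\nu+m+1)+\psi(m+1)$, if $-\nu\notin\{0,1,2,\dots\}$; $S_{-1,0}(\zeta)=\frac12\sum_{m\ge0}\frac{(-1)^m(\zeta/2)^{2m}}{(m!)^2}\{[\log\frac\zeta2-\psi(m+1)]^2-\frac12\psi'(m+1)+\frac{\pi^2}4\}$; $S_{-n-1,-n}=\frac{(-1)^n\zeta^n}{n!}\frac{d^n}{d(\zeta^2)^n}S_{-1,0}$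 for integers $n\ge1$. If $\nu\in\{1,\dots,p\}$, $S_{\nu-2p-1,\nu}:=S_{\nu-2p-1,-\nu}$ (Lommel functions are even in $\nu$), which is given by the preceding formulas with $\nu$ replaced by $-\nu$ and $p$ by $p-\nu$. $S_{\nu-2p-1,\nu}(L\mathrm{e}^{Mz})$ is the entire function of $z$ obtained by analytic continuation of a branch along $\zeta=L\mathrm{e}^{Mz}$. An entire $f$ is subnormal if $\limsup_{r\to\infty}\frac{\log\log M(r,f)}{r}=0$, $M(r,f)=\max_{|z|\le r}|f(z)|$. *)

theory Defs
  imports "HOL-Analysis.Analysis"
begin

text \<open>Convention: all functions of the complex variable zeta are lifted to the
logarithmic variable w, zeta = exp w.  Thus zeta powr a is exp (a*w), log zeta is w,
log (zeta/2) is w - ln 2.  Every such lifted function is entire in w, and the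
branches of S(L e^(M z)) obtained by analytic continuation are exactly
z |-> F (Ln L + 2 pi i k + M z), k an integer.\<close>

definition besselJ_lift :: "complex \<Rightarrow> complex \<Rightarrow> complex" where
  "besselJ_lift \<nu> w =
     (\<Sum>m. (-1) ^ m * exp ((\<nu> + 2 * of_nat m) * (w - of_real (ln 2)))
            * rGamma (\<nu> + of_nat m + 1) / of_nat (fact m))"

definition besselY_nonint_lift :: "complex \<Rightarrow> complex \<Rightarrow> complex" where
  "besselY_nonint_lift \<nu> w =
     (besselJ_lift \<nu> w * cos (\<nu> * of_real pi) - besselJ_lift (- \<nu>) w) / sin (\<nu> * of_real pi)"

definition besselY_lift :: "complex \<Rightarrow> complex \<Rightarrow> complex" where
  "besselY_lift \<nu> w =
     (if \<nu> \<in> \<int> then Lim (at \<nu>) (\<lambda>\<mu>. besselY_nonint_lift \<mu> w)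
      else besselY_nonint_lift \<nu> w)"

text \<open>S_{nu-1,nu}, valid when -nu is not in {0,1,2,...}.\<close>
definition lommel_A :: "complex \<Rightarrow> nat \<Rightarrow> complex" where
  "lommel_A \<nu> m = 2 * of_real (ln 2) + Digamma (\<nu> + of_nat m + 1) + Digamma (of_nat m + 1)"

definition lommel_S1_generic :: "complex \<Rightarrow> complex \<Rightarrow> complex" where
  "lommel_S1_generic \<nu> w =
     Gamma \<nu> * (2 powr (\<nu> - 1) * besselJ_lift \<nu> w * w
                - 2 powr (\<nu> - 2) * of_real pi * besselY_lift \<nu> w
                - exp (\<nu> * w) / 4 *
                  (\<Sum>m. (-1) ^ m * exp (2 * of_nat m * (w - of_real (ln 2))) * lommel_A \<nu> m
                        / (of_nat (fact m) * Gamma (\<nu> + of_nat m + 1))))"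

text \<open>S_{-1,0}, lifted.\<close>
definition lommel_S00 :: "complex \<Rightarrow> complex" where
  "lommel_S00 w = 1/2 *
     (\<Sum>m. (-1) ^ m * exp (2 * of_nat m * (w - of_real (ln 2))) / (of_nat (fact m))^2 *
        ((w - of_real (ln 2) - Digamma (of_nat m + 1))^2 - Polygamma 1 (of_nat m + 1) / 2
          + of_real pi ^ 2 / 4))"

text \<open>d/d(zeta^2) in the lifted variable: zeta^2 = exp (2w), so d/d(zeta^2) = exp(-2w)/2 * d/dw.\<close>
definition dzeta2 :: "(complex \<Rightarrow> complex) \<Rightarrow> complex \<Rightarrow> complex" where
  "dzeta2 g = (\<lambda>w. exp (- 2 * w) / 2 * deriv g w)"

text \<open>S_{-n-1,-n} = (-1)^n zeta^n / n! * d^n/d(zeta^2)^n S_{-1,0}.\<close>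
definition lommel_S1_negint :: "nat \<Rightarrow> complex \<Rightarrow> complex" where
  "lommel_S1_negint n w = (-1) ^ n * exp (of_nat n * w) / of_nat (fact n) * (dzeta2 ^^ n) lommel_S00 w"

definition lommel_S1 :: "complex \<Rightarrow> complex \<Rightarrow> complex" where
  "lommel_S1 \<nu> w =
     (if \<exists>n::nat. \<nu> = - of_nat n then lommel_S1_negint (nat (- \<lfloor>Re \<nu>\<rfloor>)) w
      else lommel_S1_generic \<nu> w)"

text \<open>S_{nu-2p-1,nu} for nu not in {1,...,p}.\<close>
definition lommel_gen :: "nat \<Rightarrow> complex \<Rightarrow> complex \<Rightarrow> complex" where
  "lommel_gen p \<nu> w =
     (\<Sum>m<p. (-1) ^ m * exp ((\<nu> - 2 * of_nat p + 2 * of_nat m) * w)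
        / (2 ^ (2 * m + 2) * pochhammer (- of_nat p) (m + 1) * pochhammer (\<nu> - of_nat p) (m + 1)))
     + (-1) ^ p * lommel_S1 \<nu> w / (2 ^ (2 * p) * of_nat (fact p) * pochhammer (1 - \<nu>) p)"

text \<open>S_{nu-2p-1,nu}(exp w) in general, using evenness in nu when nu is in {1,...,p}.\<close>
definition lommel :: "nat \<Rightarrow> complex \<Rightarrow> complex \<Rightarrow> complex" where
  "lommel p \<nu> w =
     (if \<exists>k::nat. 1 \<le> k \<and> k \<le> p \<and> \<nu> = of_nat k
      then lommel_gen (p - nat \<lfloor>Re \<nu>\<rfloor>) (- \<nu>) w
      else lommel_gen p \<nu> w)"

definition max_modulus :: "(complex \<Rightarrow> complex) \<Rightarrow> real \<Rightarrow> real" where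
  "max_modulus f r = Sup ((\<lambda>z. norm (f z)) ` cball 0 r)"

definition subnormal :: "(complex \<Rightarrow> complex) \<Rightarrow> bool" where
  "subnormal f \<longleftrightarrow>
     Limsup at_top (\<lambda>r::real. ereal (ln (ln (max_modulus f r)) / r)) = 0"

end

theory Submission imports Defs "HOL-Real_Asymp.Real_Asymp" "HOL-Complex_Analysis.Complex_Analysis"
begin

lemma poly_le_exp:
  fixes t :: real assumes "t \<ge> 0"
  shows "t ^ (2*N) \<le> (8 * real N + 8) ^ (2*N) * exp (t/4)"
proof -
  define c where "c = 8 * real N + 8"
  have c: "c > 0" by (simp add: c_def)
  have "t / c \<le> exp (t / c)" using exp_ge_add_one_self[of "t/c"] by linarith
  hence "(t/c)^(2*N) \<le> exp (t/c) ^ (2*N)" using assms c by (intro power_mono) auto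
  also have "\<dots> = exp (real (2*N) * (t/c))" by (subst exp_of_nat_mult) simp
  also have "\<dots> \<le> exp (t/4)"
  proof -
    have "real (2*N) * (t/c) = t * (2*real N / c)" by simp
    also have "\<dots> \<le> t * (1/4)" using assms c
      by (intro mult_left_mono) (auto simp: c_def field_simps)
    finally show ?thesis by simp
  qed
  finally have "t^(2*N) / c^(2*N) \<le> exp (t/4)" by (simp add: power_divide)
  thus ?thesis using c unfolding c_def[symmetric] by (simp add: field_simps)
qed

lemma growth:
  fixes K :: real assumes K: "K > 0"
  shows "\<forall>\<^sub>F t in at_top. \<exists>m. exp (t/8) \<le> t^(2*m) / (2*K*(fact (m+N))^2)"
proof -
  define D where "D = 2 * exp 1 * K * (8 * real N + 8) ^ (2*N)"
  have "filterlim (\<lambda>t::real. exp (t/8)) at_top at_top" by real_asymp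
  hence ev1: "\<forall>\<^sub>F t in at_top. D \<le> exp (t/8)" by (simp add: filterlim_at_top)
  have ev2: "\<forall>\<^sub>F t in at_top. t \<ge> 2 * real N + 2" by (rule eventually_ge_at_top)
  show ?thesis using ev1 ev2
  proof eventually_elim
    case (elim t)
    define j where "j = nat \<lfloor>t/2\<rfloor>"
    have t0: "t > 0" using elim by simp
    have jle: "real j \<le> t/2" using elim by (simp add: j_def; linarith)
    have jge: "real j \<ge> t/2 - 1" using elim by (simp add: j_def; linarith)
    have jN: "j \<ge> N" using jge elim by linarith
    define m where "m = j - N"
    have mj: "m + N = j" using jN by (simp add: m_def)
    have f1: "fact j \<le> (t/2) ^ j"
    proof -
      have "(fact j :: real) \<le> real (j ^ j)" by (rule fact_le_power)
      also have "\<dots> = real j ^ j" by simp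
      also have "\<dots> \<le> (t/2)^j" using jle by (intro power_mono) auto
      finally show ?thesis .
    qed
    have f2: "(fact j :: real)^2 \<le> (t/2)^(2*j)"
    proof -
      have "(fact j :: real)^2 \<le> ((t/2)^j)^2" using f1 by (intro power_mono) auto
      thus ?thesis by (simp add: power_mult[symmetric] mult.commute)
    qed
    have tm: "t^(2*m) * t^(2*N) = t^(2*j)" proof - have "2*m+2*N = 2*j" using mj by simp thus ?thesis by (metis power_add) qed
    have e4: "exp (real j) \<le> 4 ^ j"
    proof -
      have "exp (real j) = exp 1 ^ j" by (simp flip: exp_of_nat_mult)
      also have "\<dots> \<le> 4 ^ j" using exp_le by (intro power_mono) auto
      finally show ?thesis .
    qed
    have "exp (t/2) \<le> exp 1 * exp (real j)" using jge by (simp flip: exp_add)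
    also have "\<dots> \<le> exp 1 * 4^j" using e4 by simp
    finally have A: "exp (t/2) \<le> exp 1 * 4^j" .
    have P: "t ^ (2*N) \<le> (8 * real N + 8) ^ (2*N) * exp (t/4)" using t0 by (intro poly_le_exp) auto
    have "exp (t/8) * (2*K*(fact j)^2) * t^(2*N) \<le> exp (t/8) * (2*K*(t/2)^(2*j)) * ((8 * real N + 8) ^ (2*N) * exp (t/4))"
      using f2 P K t0 by (intro mult_mono) auto
    also have "\<dots> = D * exp (t/8) * exp (t/4) * (t/2)^(2*j) / exp 1" by (simp add: D_def)
    also have "\<dots> \<le> exp (t/8) * exp (t/8) * exp (t/4) * (t/2)^(2*j) / exp 1"
      using elim t0 by (intro divide_right_mono mult_right_mono) auto
    also have "\<dots> = exp (t/2) * (t/2)^(2*j) / exp 1" by (simp flip: exp_add)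
    also have "\<dots> \<le> exp 1 * 4^j * (t/2)^(2*j) / exp 1" using A t0 by (intro divide_right_mono mult_right_mono) auto
    also have "\<dots> = t^(2*j)" by (simp add: power_mult power_divide)
    finally have "exp (t/8) * (2*K*(fact j)^2) * t^(2*N) \<le> t^(2*m) * t^(2*N)" using tm by simp
    hence "exp (t/8) * (2*K*(fact j)^2) \<le> t^(2*m)" using t0 by simp
    hence "exp (t/8) \<le> t^(2*m) / (2*K*(fact (m+N))^2)" using K mj by (simp add: field_simps)
    thus ?case by blast
  qed
qed

definition ent :: "(nat \<Rightarrow> complex) \<Rightarrow> bool" where
  "ent c \<longleftrightarrow> (\<forall>u. summable (\<lambda>m. c m * u^m))"

definition PS :: "(nat \<Rightarrow> complex) \<Rightarrow> complex \<Rightarrow> complex" where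
  "PS c u = (\<Sum>m. c m * u^m)"

lemma ent_diffs: "ent c \<Longrightarrow> ent (diffs c)"
  unfolding ent_def by (intro allI termdiff_converges_all) auto

lemma ent_diffs_iter: "ent c \<Longrightarrow> ent ((diffs ^^ n) c)"
  by (induction n) (auto intro: ent_diffs)

lemma PS_deriv: "ent c \<Longrightarrow> (PS c has_field_derivative PS (diffs c) u) (at u)"
  unfolding PS_def ent_def
  by (rule termdiffs_strong_converges_everywhere) auto

lemma PS_holo: "ent c \<Longrightarrow> PS c holomorphic_on S"
  using PS_deriv by (meson field_differentiable_def holomorphic_on_def field_differentiable_at_within)

lemma PS_cont: "ent c \<Longrightarrow> continuous_on S (PS c)"
  by (intro holomorphic_on_imp_continuous_on PS_holo)

lemma deriv_PS: "ent c \<Longrightarrow> deriv (PS c) = PS (diffs c)"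
  using PS_deriv DERIV_imp_deriv by blast

lemma higher_deriv_PS: "ent c \<Longrightarrow> (deriv ^^ n) (PS c) = PS ((diffs ^^ n) c)"
proof (induction n)
  case (Suc n)
  thus ?case using deriv_PS[OF ent_diffs_iter[OF Suc.prems, of n]] by simp
qed simp

lemma PS_0: "PS c 0 = c 0"
  unfolding PS_def using powser_zero[of c] by simp

lemma diffs_iter_val: "(diffs ^^ n) (c::nat\<Rightarrow>complex) m * fact m = fact (m+n) * c (m+n)"
proof (induction n arbitrary: m)
  case 0 thus ?case by (subst mult.commute) simp
next
  case (Suc n)
  have "(diffs ^^ Suc n) c m * fact m = of_nat (Suc m) * fact m * (diffs ^^ n) c (Suc m)"
    by (simp add: diffs_def)
  also have "\<dots> = (diffs ^^ n) c (Suc m) * fact (Suc m)" by (simp add: algebra_simps)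
  also have "\<dots> = fact (Suc m + n) * c (Suc m + n)" by (rule Suc.IH)
  finally show ?case by simp
qed

lemma Cauchy_coeff:
  assumes "ent c" "s > 0" "c m \<noteq> 0"
  shows "\<exists>u. norm u = s \<and> norm (PS c u) > norm (c m) * s^m / 2"
proof (rule ccontr)
  assume "\<not> ?thesis"
  hence B: "\<And>u. norm (0 - u) = s \<Longrightarrow> norm (PS c u) \<le> norm (c m) * s^m / 2" by force
  have "norm ((deriv ^^ m) (PS c) 0) \<le> fact m * (norm (c m) * s^m / 2) / s^m"
    by (rule Cauchy_inequality[OF PS_holo[OF assms(1)] PS_cont[OF assms(1)] assms(2) B])
  also have "(deriv ^^ m) (PS c) 0 = fact m * c m"
    using higher_deriv_PS[OF assms(1), of m] PS_0 diffs_iter_val[of m c 0] by simp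
  finally have "fact m * norm (c m) \<le> fact m * norm (c m) / 2"
    using assms(2) by (simp add: norm_mult)
  thus False using assms(3) by simp
qed

lemma ent_bound:
  assumes "\<forall>\<^sub>F m in sequentially. norm (c m) \<le> K * B^m / fact m" "B \<ge> 0"
  shows "ent c"
  unfolding ent_def
proof
  fix u :: complex
  have s: "summable (\<lambda>m. K * ((B * norm u)^m / fact m))"
  proof (intro summable_mult)
    show "summable (\<lambda>m. (B * norm u)^m / fact m)"
      using summable_exp[of "B * norm u"] by (simp add: divide_inverse mult.commute)
  qed
  show "summable (\<lambda>m. c m * u^m)"
  proof (rule summable_comparison_test_ev[OF _ s])
    show "\<forall>\<^sub>F m in sequentially. norm (c m * u^m) \<le> K * ((B * norm u)^m / fact m)"
      using assms(1)
    proof eventually_elim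
      case (elim m)
      have "norm (c m * u^m) = norm (c m) * norm u ^ m" by (simp add: norm_mult norm_power)
      also have "\<dots> \<le> K * B^m / fact m * norm u ^ m" using elim by (intro mult_right_mono) auto
      also have "\<dots> = K * ((B * norm u)^m / fact m)" by (simp add: power_mult_distrib)
      finally show ?case .
    qed
  qed
qed

lemma big_x:
  fixes K :: real and N :: nat and q :: "nat \<Rightarrow> complex"
  assumes q: "ent q" and K: "K > 0"
    and qlow: "\<And>m. norm (q m) \<ge> 1 / (K * (fact (m+N))^2)"
  shows "\<forall>\<^sub>F x in at_top. \<exists>w. Re w = x \<and> \<bar>Im w\<bar> \<le> pi/2 \<and>
            exp (exp x / 16) \<le> norm (PS q (exp (2*(w - of_real (ln 2)))))"
proof -
  have lim: "filterlim (\<lambda>x::real. exp x / 2) at_top at_top" by real_asymp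
  have "\<forall>\<^sub>F x in at_top. \<exists>m. exp ((exp x / 2)/8) \<le> (exp x / 2)^(2*m) / (2*K*(fact (m+N))^2)"
    by (rule eventually_compose_filterlim[OF growth[OF K, of N] lim])
  thus ?thesis
  proof eventually_elim
    case (elim x)
    then obtain m where m: "exp ((exp x / 2)/8) \<le> (exp x / 2)^(2*m) / (2*K*(fact (m+N))^2)" by blast
    define t where "t = exp x / 2"
    define s where "s = t^2"
    have t0: "t > 0" by (simp add: t_def)
    have s0: "s > 0" using t0 by (simp add: s_def)
    have qpos: "1 / (K * (fact (m+N))^2) > 0" using K by simp
    hence qm: "q m \<noteq> 0" using qlow[of m] by auto
    obtain u where u: "norm u = s" "norm (PS q u) > norm (q m) * s^m / 2"
      using Cauchy_coeff[OF q s0 qm] by blast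
    have "exp (exp x / 16) = exp (t/8)" by (simp add: t_def)
    also have "\<dots> \<le> t^(2*m) / (2*K*(fact (m+N))^2)" using m by (simp add: t_def)
    also have "\<dots> = (1 / (K * (fact (m+N))^2)) * s^m / 2" by (simp add: s_def power_mult)
    also have "\<dots> \<le> norm (q m) * s^m / 2"
      using qlow[of m] s0 by (intro divide_right_mono mult_right_mono) auto
    also have "\<dots> < norm (PS q u)" by (rule u(2))
    finally have big: "exp (exp x / 16) \<le> norm (PS q u)" by simp
    have u0: "u \<noteq> 0" using u(1) s0 by auto
    define w where "w = of_real (ln 2) + Ln u / 2"
    have "Re w = ln 2 + ln s / 2" using u0 u(1) by (simp add: w_def)
    also have "ln s = 2 * ln t" using t0 unfolding s_def by (simp add: ln_realpow)
    also have "ln t = x - ln 2" unfolding t_def by (subst ln_div) auto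
    finally have Rew: "Re w = x" by (simp add: field_simps)
    have "\<bar>Im w\<bar> \<le> pi/2" using mpi_less_Im_Ln[of u] Im_Ln_le_pi[of u] u0 by (simp add: w_def abs_le_iff)
    moreover have "exp (2*(w - of_real (ln 2))) = u" using u0 by (simp add: w_def)
    ultimately show ?case using Rew big by metis
  qed
qed

lemma le_max_modulus:
  assumes "continuous_on UNIV f" "norm z \<le> r"
  shows "norm (f z) \<le> max_modulus f r"
proof -
  have "compact ((\<lambda>z. norm (f z)) ` cball 0 r)"
    by (intro compact_continuous_image continuous_on_norm continuous_on_subset[OF assms(1)]) auto
  hence "bdd_above ((\<lambda>z. norm (f z)) ` cball 0 r)" by (intro bounded_imp_bdd_above compact_imp_bounded)
  moreover have "norm (f z) \<in> (\<lambda>z. norm (f z)) ` cball 0 r" using assms(2) by auto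
  ultimately show ?thesis unfolding max_modulus_def by (rule cSup_upper[rotated])
qed

lemma ev_real_shift:
  fixes \<mu> R0 :: real assumes "\<mu> > 0" "\<forall>\<^sub>F x in at_top. P x"
  shows "\<forall>\<^sub>F r in at_top. P (\<mu> * r - R0)"
proof -
  obtain X where X: "\<And>x. x \<ge> X \<Longrightarrow> P x" using assms(2) by (auto simp: eventually_at_top_linorder)
  show ?thesis unfolding eventually_at_top_linorder
  proof (intro exI allI impI)
    fix r assume "r \<ge> (X + R0) / \<mu>"
    hence "X \<le> \<mu> * r - R0" using assms(1) by (simp add: field_simps)
    thus "P (\<mu> * r - R0)" by (rule X)
  qed
qed

lemma main_abstract:
  fixes F :: "complex \<Rightarrow> complex" and c0 M C \<gamma> a b d :: complex
    and q :: "nat \<Rightarrow> complex" and K :: real and N :: nat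
  assumes contF: "continuous_on UNIV F" and M: "M \<noteq> 0" and C: "C \<noteq> 0" and q: "ent q" and K: "K > 0"
    and qlow: "\<And>m. norm (q m) \<ge> 1 / (K * (fact (m+N))^2)"
    and G: "\<And>w. C * exp (\<gamma>*w) * PS q (exp (2*(w - of_real (ln 2)))) =
               a * F (w + 4 * of_real pi * \<i>) + b * F (w + 2 * of_real pi * \<i>) + d * F w"
  shows "\<not> subnormal (\<lambda>z. F (c0 + M*z))"
proof
  define f where "f = (\<lambda>z. F (c0 + M*z))"
  have contf: "continuous_on UNIV f" unfolding f_def
    by (intro continuous_on_compose2[OF contF] continuous_intros) auto
  define \<mu> where "\<mu> = norm M"
  have \<mu>: "\<mu> > 0" using M by (simp add: \<mu>_def)
  define R0 where "R0 = norm c0 + 5 * pi"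
  define A where "A = norm a + norm b + norm d + 1"
  have A: "A > 0" by (simp add: A_def add_nonneg_pos)
  define l where "l = ln (norm C / A)"
  define \<Lambda> where "\<Lambda> = (\<lambda>x. norm C * exp (- norm \<gamma> * (x+2)) * exp (exp x / 16) / A)"
  have ev1: "\<forall>\<^sub>F x in at_top. \<forall>r. x = \<mu> * r - R0 \<longrightarrow> \<Lambda> x \<le> max_modulus f r"
    using big_x[OF q K qlow] eventually_ge_at_top[of "0::real"]
  proof eventually_elim
    case (elim x)
    then obtain w where w: "Re w = x" "\<bar>Im w\<bar> \<le> pi/2"
       "exp (exp x / 16) \<le> norm (PS q (exp (2*(w - of_real (ln 2)))))" by blast
    have nw: "norm w \<le> x + pi/2" using cmod_le[of w] w elim by simp
    have "norm (\<gamma>*w) \<le> norm \<gamma> * (x+2)"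
      using nw pi_less_4 by (simp add: norm_mult) (intro mult_left_mono, auto)
    hence ex: "exp (- norm \<gamma> * (x+2)) \<le> norm (exp (\<gamma>*w))"
      using abs_Re_le_cmod[of "\<gamma>*w"] by simp
    have GL: "\<Lambda> x * A \<le> norm (a * F (w + 4 * of_real pi * \<i>) + b * F (w + 2 * of_real pi * \<i>) + d * F w)"
    proof -
      have "\<Lambda> x * A = norm C * exp (- norm \<gamma> * (x+2)) * exp (exp x / 16)"
        using A by (simp add: \<Lambda>_def)
      also have "\<dots> \<le> norm C * norm (exp (\<gamma>*w)) * norm (PS q (exp (2*(w - of_real (ln 2)))))"
        using ex w(3) by (intro mult_mono mult_left_mono) auto
      also have "\<dots> = norm (C * exp (\<gamma>*w) * PS q (exp (2*(w - of_real (ln 2)))))" by (simp add: norm_mult)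
      finally show ?thesis using G by simp
    qed
    have "\<exists>w'. w' \<in> {w + 4 * of_real pi * \<i>, w + 2 * of_real pi * \<i>, w} \<and> \<Lambda> x \<le> norm (F w')"
    proof (rule ccontr)
      assume "\<not> ?thesis"
      hence lt: "norm (F (w + 4 * of_real pi * \<i>)) < \<Lambda> x" "norm (F (w + 2 * of_real pi * \<i>)) < \<Lambda> x"
         "norm (F w) < \<Lambda> x" by auto
      have "norm (a * F (w + 4 * of_real pi * \<i>) + b * F (w + 2 * of_real pi * \<i>) + d * F w)
         \<le> norm a * norm (F (w + 4 * of_real pi * \<i>)) + norm b * norm (F (w + 2 * of_real pi * \<i>)) + norm d * norm (F w)"
      proof -
        have tri: "\<And>X Y Z :: complex. norm (X + Y + Z) \<le> norm X + norm Y + norm Z"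
          using norm_triangle_ineq order_trans add_mono by (smt (verit))
        show ?thesis using tri[of "a * F (w + 4 * of_real pi * \<i>)" "b * F (w + 2 * of_real pi * \<i>)" "d * F w"]
          by (simp add: norm_mult)
      qed
      also have "\<dots> \<le> norm a * \<Lambda> x + norm b * \<Lambda> x + norm d * \<Lambda> x"
        using lt by (intro add_mono mult_left_mono) auto
      also have "\<dots> < \<Lambda> x * A"
      proof -
        have "\<Lambda> x > 0" using C A by (simp add: \<Lambda>_def)
        thus ?thesis by (simp add: A_def algebra_simps)
      qed
      finally show False using GL by simp
    qed
    then obtain w' where w': "w' \<in> {w + 4 * of_real pi * \<i>, w + 2 * of_real pi * \<i>, w}" "\<Lambda> x \<le> norm (F w')"
      by blast
    have nw': "norm w' \<le> x + 5 * pi"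
    proof -
      have "norm w' \<le> norm w + 4 * pi" using w'(1) pi_gt_zero
        by (auto intro: order_trans[OF norm_triangle_ineq] simp: norm_mult)
      thus ?thesis using nw pi_gt_zero by linarith
    qed
    show ?case
    proof (intro allI impI)
      fix r assume xr: "x = \<mu> * r - R0"
      define z where "z = (w' - c0) / M"
      have fz: "f z = F w'" using M by (simp add: f_def z_def)
      have "norm z = norm (w' - c0) / \<mu>" by (simp add: z_def \<mu>_def norm_divide)
      also have "\<dots> \<le> (norm w' + norm c0) / \<mu>" using \<mu>
        by (intro divide_right_mono norm_triangle_ineq4) auto
      also have "\<dots> \<le> r" using \<mu> nw' xr by (simp add: R0_def field_simps)
      finally have "norm z \<le> r" .
      from le_max_modulus[OF contf this] w'(2) fz show "\<Lambda> x \<le> max_modulus f r" by simp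
    qed
  qed
  have "filterlim (\<lambda>x::real. exp x / (x+2)) at_top at_top" by real_asymp
  hence ev2a: "\<forall>\<^sub>F x in at_top. 32 * (norm \<gamma> + \<bar>l\<bar>) \<le> exp x / (x+2)" by (simp add: filterlim_at_top)
  have ev2: "\<forall>\<^sub>F x in at_top. x - 5 \<le> ln (ln (\<Lambda> x)) \<and> 1 < \<Lambda> x"
    using ev2a eventually_ge_at_top[of "0::real"]
  proof eventually_elim
    case (elim x)
    have "32 * (norm \<gamma> + \<bar>l\<bar>) * (x+2) \<le> exp x" using elim by (simp add: field_simps)
    moreover have "\<bar>l\<bar> * 1 \<le> \<bar>l\<bar> * (x+2)" using elim by (intro mult_left_mono) auto
    moreover have "32 * (norm \<gamma> + \<bar>l\<bar>) * (x+2) = 32 * (norm \<gamma> * (x+2)) + 32 * (\<bar>l\<bar> * (x+2))"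
      by (simp add: algebra_simps)
    ultimately have "norm \<gamma> * (x+2) + \<bar>l\<bar> \<le> exp x / 32" by linarith
    moreover have "ln (\<Lambda> x) = l - norm \<gamma> * (x+2) + exp x / 16"
      using C A by (simp add: \<Lambda>_def ln_mult ln_div l_def)
    ultimately have L: "exp x / 32 \<le> ln (\<Lambda> x)" by linarith
    have pos: "exp x / 32 > 0" by simp
    have "x - 5 \<le> ln (exp x / 32)"
    proof -
      have "ln (exp x / 32) = x - ln 32" by (simp add: ln_div)
      moreover have "ln (32::real) \<le> 5"
      proof -
        have "(2::real)^5 \<le> exp 1 ^ 5" using exp_ge_add_one_self[of "1::real"] by (intro power_mono) auto
        also have "\<dots> = exp 5" by (simp flip: exp_of_nat_mult)
        finally have "32 \<le> exp (5::real)" by simp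
        thus ?thesis using ln_le_cancel_iff[of 32 "exp 5"] by simp
      qed
      ultimately show ?thesis by simp
    qed
    also have "\<dots> \<le> ln (ln (\<Lambda> x))" using L pos by (intro ln_mono) auto
    finally have "x - 5 \<le> ln (ln (\<Lambda> x))" .
    moreover have "\<Lambda> x > 0" using C A by (simp add: \<Lambda>_def)
    moreover have "0 < ln (\<Lambda> x)" using L pos by linarith
    ultimately show ?case by simp
  qed
  have ev3: "\<forall>\<^sub>F r in at_top. \<mu>/2 \<le> ln (ln (max_modulus f r)) / r"
    using ev_real_shift[OF \<mu> ev1, of R0] ev_real_shift[OF \<mu> ev2, of R0]
      eventually_ge_at_top[of "2 * (R0 + 5) / \<mu> + 1"]
  proof eventually_elim
    case (elim r)
    define x where "x = \<mu> * r - R0"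
    have r0: "r > 0" using elim \<mu> pi_gt_zero by (smt (verit, ccfv_SIG) R0_def divide_nonneg_pos norm_ge_zero)
    have Lm: "\<Lambda> x \<le> max_modulus f r" using elim(1) x_def by blast
    have "x - 5 \<le> ln (ln (\<Lambda> x))" "1 < \<Lambda> x" using elim(2) x_def by auto
    have "ln (\<Lambda> x) \<le> ln (max_modulus f r)" using Lm \<open>1 < \<Lambda> x\<close> by (intro ln_mono) auto
    moreover have "0 < ln (\<Lambda> x)" using \<open>1 < \<Lambda> x\<close> by simp
    ultimately have "ln (ln (\<Lambda> x)) \<le> ln (ln (max_modulus f r))" using ln_mono by blast
    hence "\<mu> * r - R0 - 5 \<le> ln (ln (max_modulus f r))" using \<open>x - 5 \<le> _\<close> x_def by simp
    moreover have "\<mu> * r / 2 \<le> \<mu> * r - R0 - 5"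
    proof -
      have "2 * (R0 + 5) / \<mu> \<le> r" using elim(3) by simp
      hence "2 * (R0 + 5) \<le> r * \<mu>" using \<mu> by (simp add: field_simps)
      thus ?thesis by (simp add: field_simps)
    qed
    ultimately have "\<mu> * r / 2 \<le> ln (ln (max_modulus f r))" by simp
    thus ?case using r0 by (simp add: field_simps)
  qed
  have "ereal (\<mu>/2) \<le> Liminf at_top (\<lambda>r. ereal (ln (ln (max_modulus f r)) / r))"
    by (intro Liminf_bounded) (use ev3 in \<open>eventually_elim, simp\<close>)
  also have "\<dots> \<le> Limsup at_top (\<lambda>r. ereal (ln (ln (max_modulus f r)) / r))"
    by (rule Liminf_le_Limsup) simp
  finally have "Limsup at_top (\<lambda>r. ereal (ln (ln (max_modulus f r)) / r)) \<noteq> 0" using \<mu> by auto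
  moreover assume "subnormal (\<lambda>z. F (c0 + M*z))"
  ultimately show False unfolding subnormal_def f_def by simp
qed

lemma lin_growth:
  fixes g :: "complex \<Rightarrow> complex" and a :: complex
  assumes g: "\<And>z. norm z \<ge> 1 \<Longrightarrow> norm (g (z+1)) \<le> norm (g z) + 1"
  shows "\<exists>D. \<forall>\<^sub>F m in sequentially. norm (g (a + of_nat m + 1)) \<le> D * 2^m"
proof -
  define m0 where "m0 = nat \<lceil>norm a\<rceil>"
  define D0 where "D0 = norm (g (a + of_nat m0 + 1))"
  have big: "norm (a + of_nat m + 1) \<ge> 1" if "m \<ge> m0" for m
  proof -
    have "real m \<ge> norm a" using that by (simp add: m0_def; linarith)
    moreover have "norm (of_nat m + 1 :: complex) \<le> norm (a + of_nat m + 1) + norm a"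
      using norm_triangle_ineq4[of "a + of_nat m + 1" a] by (simp add: algebra_simps)
    moreover have "norm (of_nat m + 1 :: complex) = real m + 1"
      by (metis norm_of_nat of_nat_Suc add.commute)
    ultimately show ?thesis by linarith
  qed
  have rec: "norm (g (a + of_nat m + 1)) \<le> D0 + real (m - m0)" if "m \<ge> m0" for m
    using that
  proof (induction m rule: dec_induct)
    case base thus ?case by (simp add: D0_def)
  next
    case (step m)
    have "norm (g (a + of_nat (Suc m) + 1)) = norm (g ((a + of_nat m + 1) + 1))" by (simp add: algebra_simps)
    also have "\<dots> \<le> norm (g (a + of_nat m + 1)) + 1" using g big[OF step(1)] by blast
    also have "\<dots> \<le> D0 + real (m - m0) + 1" using step by simp
    finally show ?case using step(1) by (simp add: Suc_diff_le)
  qed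
  show ?thesis
  proof (intro exI eventually_sequentiallyI)
    fix m assume m: "m \<ge> m0"
    have "real m < 2^m" using less_exp[of m] by (metis of_nat_less_iff of_nat_numeral of_nat_power)
    moreover have "D0 \<le> D0 * 2^m" using D0_def by (simp add: mult_le_cancel_left1)
    moreover have D0: "D0 \<ge> 0" by (simp add: D0_def)
    moreover have "real (m - m0) \<le> real m" by simp
    moreover have "(D0 + 1) * 2^m = D0 * 2^m + 2^m" by (simp add: algebra_simps)
    ultimately have "D0 + real (m - m0) \<le> (D0 + 1) * 2^m" by linarith
    thus "norm (g (a + of_nat m + 1)) \<le> (D0 + 1) * 2^m" using rec[OF m] by linarith
  qed
qed

lemma rGamma_step: "norm (z::complex) \<ge> 1 \<Longrightarrow> norm (rGamma (z+1)) \<le> norm (rGamma z) + 1"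
proof -
  assume z: "norm z \<ge> 1"
  have "norm (rGamma z) = norm z * norm (rGamma (z+1))" using rGamma_plus1[of z] by (metis norm_mult)
  moreover have "1 * norm (rGamma (z+1)) \<le> norm z * norm (rGamma (z+1))"
    using z by (intro mult_right_mono) auto
  ultimately have "norm (rGamma (z+1)) \<le> norm (rGamma z)" by simp
  thus ?thesis by simp
qed

lemma Digamma_step: "norm (z::complex) \<ge> 1 \<Longrightarrow> norm (Digamma (z+1)) \<le> norm (Digamma z) + 1"
proof -
  assume z: "norm z \<ge> 1"
  hence "z \<noteq> 0" by auto
  hence "Digamma (z+1) = Digamma z + 1/z" by (rule Digamma_plus1)
  moreover have "norm (1/z) \<le> 1" using z by (simp add: norm_divide divide_le_eq_1)
  ultimately show ?thesis using norm_triangle_ineq[of "Digamma z" "1/z"] by simp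
qed

lemma Polygamma1_step: "norm (z::complex) \<ge> 1 \<Longrightarrow> norm (Polygamma 1 (z+1)) \<le> norm (Polygamma 1 z) + 1"
proof -
  assume z: "norm z \<ge> 1"
  hence "z \<noteq> 0" by auto
  hence "Polygamma 1 (z+1) = Polygamma 1 z + (-1)^1 * fact 1 / z^Suc 1" by (rule Polygamma_plus1)
  moreover have "norm ((-1)^1 * fact 1 / z^Suc 1 :: complex) \<le> 1"
  proof -
    have "1 \<le> norm z ^ 2" using z by (metis one_le_power)
    thus ?thesis by (simp add: norm_divide norm_power divide_le_eq_1 norm_mult power2_eq_square)
  qed
  ultimately show ?thesis using norm_triangle_ineq[of "Polygamma 1 z" "(-1)^1 * fact 1 / z^Suc 1"] by simp
qed

abbreviation sh :: complex where "sh \<equiv> 2 * of_real pi * \<i>"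

definition xx :: "complex \<Rightarrow> complex" where "xx w = exp (2 * (w - of_real (ln 2)))"

lemma exp_int_sh: "exp (of_int k * sh) = 1"
proof -
  have "of_int k * sh = \<i> * (of_int k * (of_real pi * 2))" by (simp add: algebra_simps)
  show ?thesis unfolding \<open>of_int k * sh = _\<close> by (rule exp_2pi_1_int)
qed

lemma exp_nat_sh: "exp (of_nat k * sh) = 1"
  using exp_int_sh[of "int k"] by simp

lemma xx_sh: "xx (w + sh) = xx w"
proof -
  have "2 * (w + sh - of_real (ln 2)) = 2 * (w - of_real (ln 2)) + of_nat 2 * sh" by (simp add: algebra_simps)
  thus ?thesis unfolding xx_def by (simp only: exp_add exp_nat_sh) simp
qed

lemma xx_cont: "continuous_on S xx"
  unfolding xx_def by (intro continuous_intros)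

lemma PS_xx_cont: "ent c \<Longrightarrow> continuous_on S (\<lambda>w. PS c (xx w))"
  by (rule continuous_on_compose2[OF PS_cont[of c UNIV] xx_cont]) auto

lemma exp_shift: "exp ((a + of_int k) * (w + sh)) = exp (a * sh) * exp ((a + of_int k) * w)"
proof -
  have "(a + of_int k) * (w + sh) = (a + of_int k) * w + a * sh + of_int k * sh" by (simp add: algebra_simps)
  thus ?thesis by (simp add: exp_add exp_int_sh)
qed

definition qJ :: "complex \<Rightarrow> nat \<Rightarrow> complex" where
  "qJ \<nu> m = (-1)^m * rGamma (\<nu> + of_nat m + 1) / fact m"

definition qA :: "complex \<Rightarrow> nat \<Rightarrow> complex" where
  "qA \<nu> m = (-1)^m * lommel_A \<nu> m / (fact m * Gamma (\<nu> + of_nat m + 1))"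

lemma ent_qJ: "ent (qJ \<nu>)"
proof -
  obtain D where D: "\<forall>\<^sub>F m in sequentially. norm (rGamma (\<nu> + of_nat m + 1)) \<le> D * 2^m"
    using lin_growth[of rGamma \<nu>, OF rGamma_step] by blast
  show ?thesis
  proof (rule ent_bound[where K = D and B = 2])
    show "\<forall>\<^sub>F m in sequentially. norm (qJ \<nu> m) \<le> D * 2^m / fact m" using D
      by eventually_elim (simp add: qJ_def norm_mult norm_divide norm_power divide_right_mono)
  qed simp
qed

lemma ent_qA: "ent (qA \<nu>)"
proof -
  obtain D where D: "\<forall>\<^sub>F m in sequentially. norm (rGamma (\<nu> + of_nat m + 1)) \<le> D * 2^m"
    using lin_growth[of rGamma \<nu>, OF rGamma_step] by blast
  obtain D1 where D1: "\<forall>\<^sub>F m in sequentially. norm (Digamma (\<nu> + of_nat m + 1)) \<le> D1 * 2^m"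
    using lin_growth[of Digamma \<nu>, OF Digamma_step] by blast
  obtain D2 where D2: "\<forall>\<^sub>F m in sequentially. norm (Digamma (0 + of_nat m + 1 :: complex)) \<le> D2 * 2^m"
    using lin_growth[of Digamma 0, OF Digamma_step] by blast
  define E where "E = 2 * ln 2 + D1 + D2"
  show ?thesis
  proof (rule ent_bound[where K = "E * D" and B = 4])
    show "\<forall>\<^sub>F m in sequentially. norm (qA \<nu> m) \<le> E * D * 4^m / fact m" using D D1 D2
    proof eventually_elim
      case (elim m)
      have "norm (lommel_A \<nu> m) \<le> 2 * ln 2 + norm (Digamma (\<nu> + of_nat m + 1)) + norm (Digamma (0 + of_nat m + 1 :: complex))"
        unfolding lommel_A_def using norm_triangle_ineq[of "2 * of_real (ln 2) + Digamma (\<nu> + of_nat m + 1)" "Digamma (of_nat m + 1)"]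
          norm_triangle_ineq[of "2 * of_real (ln 2)" "Digamma (\<nu> + of_nat m + 1)"] by simp
      also have "\<dots> \<le> 2 * ln 2 * 2^m + D1 * 2^m + D2 * 2^m"
      proof -
        have "2 * ln 2 * 1 \<le> 2 * ln (2::real) * 2^m" by (intro mult_left_mono) auto
        thus ?thesis using elim by linarith
      qed
      also have "\<dots> = E * 2^m" by (simp add: E_def algebra_simps)
      finally have A: "norm (lommel_A \<nu> m) \<le> E * 2^m" .
      have "norm (qA \<nu> m) = norm (lommel_A \<nu> m) * norm (rGamma (\<nu> + of_nat m + 1)) / fact m"
        by (simp add: qA_def norm_mult norm_divide rGamma_inverse_Gamma norm_inverse divide_inverse norm_power)
      also have "\<dots> \<le> (E * 2^m) * (D * 2^m) / fact m"
        using A elim by (intro divide_right_mono mult_mono) (auto intro: order_trans[OF norm_ge_zero])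
      also have "\<dots> = E * D * 4^m / fact m" by (simp add: power_mult_distrib[symmetric])
      finally show ?case .
    qed
  qed simp
qed

lemma J_repr: "besselJ_lift \<nu> w = exp (\<nu> * (w - of_real (ln 2))) * PS (qJ \<nu>) (xx w)"
proof -
  have "besselJ_lift \<nu> w = (\<Sum>m. exp (\<nu> * (w - of_real (ln 2))) * (qJ \<nu> m * xx w ^ m))"
    unfolding besselJ_lift_def
  proof (rule suminf_cong)
    fix m
    have "exp ((\<nu> + 2 * of_nat m) * (w - of_real (ln 2))) = exp (\<nu> * (w - of_real (ln 2))) * xx w ^ m"
    proof -
      have "(\<nu> + 2 * of_nat m) * (w - of_real (ln 2)) = \<nu> * (w - of_real (ln 2)) + of_nat m * (2 * (w - of_real (ln 2)))"
        by (simp add: algebra_simps)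
      thus ?thesis unfolding xx_def by (simp only: exp_add exp_of_nat_mult)
    qed
    thus "(-1) ^ m * exp ((\<nu> + 2 * of_nat m) * (w - of_real (ln 2))) * rGamma (\<nu> + of_nat m + 1) / of_nat (fact m)
          = exp (\<nu> * (w - of_real (ln 2))) * (qJ \<nu> m * xx w ^ m)"
      by (simp add: qJ_def)
  qed
  also have "\<dots> = exp (\<nu> * (w - of_real (ln 2))) * PS (qJ \<nu>) (xx w)"
    unfolding PS_def using ent_qJ unfolding ent_def by (intro suminf_mult) auto
  finally show ?thesis .
qed

lemma A_repr: "(\<Sum>m. (-1) ^ m * exp (2 * of_nat m * (w - of_real (ln 2))) * lommel_A \<nu> m
                        / (of_nat (fact m) * Gamma (\<nu> + of_nat m + 1))) = PS (qA \<nu>) (xx w)"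
  unfolding PS_def
proof (rule suminf_cong)
  fix m
  have "exp (2 * of_nat m * (w - of_real (ln 2))) = xx w ^ m"
    unfolding xx_def by (simp add: algebra_simps flip: exp_of_nat_mult)
  thus "(-1) ^ m * exp (2 * of_nat m * (w - of_real (ln 2))) * lommel_A \<nu> m
         / (of_nat (fact m) * Gamma (\<nu> + of_nat m + 1)) = qA \<nu> m * xx w ^ m"
    by (simp add: qA_def)
qed

lemma norm_poch_le:
  fixes a :: complex assumes "norm a \<le> real N"
  shows "norm (pochhammer (a + 1) m) \<le> fact (m + N)"
proof (induction m)
  case 0 thus ?case by simp
next
  case (Suc m)
  have "norm (pochhammer (a + 1) (Suc m)) = norm (pochhammer (a + 1) m) * norm (a + 1 + of_nat m)"
    by (simp add: pochhammer_Suc norm_mult)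
  also have "\<dots> \<le> fact (m + N) * (real N + 1 + real m)"
  proof (intro mult_mono Suc.IH)
    have "norm (a + 1 + of_nat m) \<le> norm a + norm (1 + of_nat m :: complex)"
      using norm_triangle_ineq[of a "1 + of_nat m"] by (simp add: add.assoc)
    also have "norm (1 + of_nat m :: complex) = 1 + real m" by (metis norm_of_nat of_nat_Suc add.commute of_nat_1 of_nat_add)
    finally show "norm (a + 1 + of_nat m) \<le> real N + 1 + real m" using assms by linarith
  qed auto
  also have "\<dots> = fact (Suc m + N)" by (simp add: algebra_simps)
  finally show ?case .
qed

lemma qJ_low:
  assumes "rGamma (\<nu> + 1) \<noteq> 0"
  shows "norm (qJ \<nu> m) \<ge> 1 / ((1 / norm (rGamma (\<nu> + 1))) * (fact (m + nat \<lceil>norm \<nu>\<rceil>))^2)"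
proof -
  define N where "N = nat \<lceil>norm \<nu>\<rceil>"
  have N: "norm \<nu> \<le> real N" unfolding N_def by linarith
  have "rGamma (\<nu> + 1) = pochhammer (\<nu> + 1) m * rGamma (\<nu> + 1 + of_nat m)" by (rule pochhammer_rGamma)
  hence "norm (rGamma (\<nu> + 1)) = norm (pochhammer (\<nu> + 1) m) * norm (rGamma (\<nu> + of_nat m + 1))"
    by (simp add: norm_mult add_ac)
  also have "\<dots> \<le> fact (m + N) * norm (rGamma (\<nu> + of_nat m + 1))"
    by (intro mult_right_mono norm_poch_le N) auto
  finally have r: "norm (rGamma (\<nu> + 1)) \<le> fact (m + N) * norm (rGamma (\<nu> + of_nat m + 1))" .
  have fm: "(fact m :: real) \<le> fact (m + N)" by (intro fact_mono) auto
  have "1 / ((1 / norm (rGamma (\<nu> + 1))) * (fact (m + N))^2) = norm (rGamma (\<nu> + 1)) / (fact (m+N) * fact (m+N))"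
    using assms by (simp add: power2_eq_square)
  also have "\<dots> \<le> fact (m + N) * norm (rGamma (\<nu> + of_nat m + 1)) / (fact (m+N) * fact (m+N))"
    using r by (intro divide_right_mono) auto
  also have "\<dots> = norm (rGamma (\<nu> + of_nat m + 1)) / fact (m+N)" by simp
  also have "\<dots> \<le> norm (rGamma (\<nu> + of_nat m + 1)) / fact m"
    using fm by (intro divide_left_mono) auto
  also have "\<dots> = norm (qJ \<nu> m)" by (simp add: qJ_def norm_mult norm_divide norm_power)
  finally show ?thesis unfolding N_def .
qed

lemma quasi_combo:
  fixes F Q J Jm :: "complex \<Rightarrow> complex"
  assumes F: "\<And>w. F w = Q w + c1 * w * J w + c2 * Jm w"
    and Q: "\<And>w. Q (w + sh) = \<alpha> * Q w" and J: "\<And>w. J (w + sh) = \<alpha> * J w"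
    and Jm: "\<And>w. Jm (w + sh) = \<beta> * Jm w"
  shows "F (w + 4 * of_real pi * \<i>) - (\<alpha> + \<beta>) * F (w + sh) + \<alpha> * \<beta> * F w = c1 * sh * \<alpha> * (\<alpha> - \<beta>) * J w"
    and "\<alpha> = \<beta> \<Longrightarrow> F (w + sh) - \<alpha> * F w = c1 * sh * \<alpha> * J w"
proof -
  have e: "w + 4 * of_real pi * \<i> = (w + sh) + sh" by simp
  have F2: "F (w + 4 * of_real pi * \<i>) = \<alpha> * \<alpha> * Q w + c1 * (w + sh + sh) * (\<alpha> * \<alpha> * J w) + c2 * (\<beta> * \<beta> * Jm w)"
    unfolding e F Q J Jm by simp
  have F1: "F (w + sh) = \<alpha> * Q w + c1 * (w + sh) * (\<alpha> * J w) + c2 * (\<beta> * Jm w)"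
    unfolding F Q J Jm by simp
  show "F (w + 4 * of_real pi * \<i>) - (\<alpha> + \<beta>) * F (w + sh) + \<alpha> * \<beta> * F w = c1 * sh * \<alpha> * (\<alpha> - \<beta>) * J w"
    unfolding F2 F1 F[of w] by (simp add: algebra_simps)
  show "\<alpha> = \<beta> \<Longrightarrow> F (w + sh) - \<alpha> * F w = c1 * sh * \<alpha> * J w"
    unfolding F1 F[of w] by (simp add: algebra_simps)
qed

lemma J_quasi: "besselJ_lift \<nu> (w + sh) = exp (\<nu> * sh) * besselJ_lift \<nu> w"
proof -
  have "\<nu> * (w + sh - of_real (ln 2)) = \<nu> * sh + \<nu> * (w - of_real (ln 2))" by (simp add: algebra_simps)
  thus ?thesis unfolding J_repr xx_sh by (simp add: exp_add)
qed

lemma J_cont: "continuous_on S (besselJ_lift \<nu>)"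
proof -
  have "continuous_on S (\<lambda>w. exp (\<nu> * (w - of_real (ln 2))) * PS (qJ \<nu>) (xx w))"
    by (intro continuous_intros PS_xx_cont ent_qJ)
  thus ?thesis by (simp add: J_repr[abs_def])
qed

lemma cont_div_const: "continuous_on S f \<Longrightarrow> continuous_on S (\<lambda>x. f x / (c::complex))"
  by (simp add: divide_inverse continuous_on_mult_right)

lemma nonint_case:
  fixes \<nu> M c0 :: complex
  assumes nu: "\<nu> \<notin> \<int>" and M: "M \<noteq> 0"
  shows "\<not> subnormal (\<lambda>z. lommel p \<nu> (c0 + M*z))"
proof -
  have nk: "\<not>(\<exists>k::nat. 1 \<le> k \<and> k \<le> p \<and> \<nu> = of_nat k)" using nu by auto
  have nn: "\<not>(\<exists>n::nat. \<nu> = - of_nat n)" using nu by (auto simp: minus_in_Ints_iff)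
  define J where "J = besselJ_lift \<nu>"
  define Jm where "Jm = besselJ_lift (-\<nu>)"
  define S where "S = (\<lambda>w. \<Sum>m<p. (-1) ^ m * exp ((\<nu> - 2 * of_nat p + 2 * of_nat m) * w)
        / (2 ^ (2 * m + 2) * pochhammer (- of_nat p) (m + 1) * pochhammer (\<nu> - of_nat p) (m + 1)))"
  define cc where "cc = (-1) ^ p / (2 ^ (2 * p) * of_nat (fact p) * pochhammer (1 - \<nu>) p :: complex)"
  define c1 where "c1 = cc * Gamma \<nu> * 2 powr (\<nu> - 1)"
  define c2 where "c2 = cc * Gamma \<nu> * 2 powr (\<nu> - 2) * of_real pi / sin (\<nu> * of_real pi)"
  define Q where "Q = (\<lambda>w. S w + cc * Gamma \<nu> * (- (2 powr (\<nu> - 2) * of_real pi * (J w * cos (\<nu> * of_real pi) / sin (\<nu> * of_real pi)))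
                     - exp (\<nu> * w) / 4 * PS (qA \<nu>) (xx w)))"
  define \<alpha> where "\<alpha> = exp (\<nu> * sh)"
  define \<beta> where "\<beta> = exp (- \<nu> * sh)"
  have Feq: "lommel p \<nu> w = Q w + c1 * w * J w + c2 * Jm w" for w
  proof -
    have L: "lommel p \<nu> w = lommel_gen p \<nu> w" unfolding lommel_def by (simp only: nk if_False)
    have S1: "lommel_S1 \<nu> w = lommel_S1_generic \<nu> w" unfolding lommel_S1_def by (simp only: nn if_False)
    have "lommel p \<nu> w = S w + cc * lommel_S1_generic \<nu> w"
      unfolding L lommel_gen_def S1 S_def cc_def by simp
    also have "lommel_S1_generic \<nu> w = Gamma \<nu> * (2 powr (\<nu> - 1) * J w * w
                - 2 powr (\<nu> - 2) * of_real pi * ((J w * cos (\<nu> * of_real pi) - Jm w) / sin (\<nu> * of_real pi))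
                - exp (\<nu> * w) / 4 * PS (qA \<nu>) (xx w))"
      unfolding lommel_S1_generic_def A_repr using nu by (simp add: besselY_lift_def besselY_nonint_lift_def J_def Jm_def)
    finally show ?thesis by (simp add: Q_def c1_def c2_def diff_divide_distrib algebra_simps)
  qed
  have Jq: "J (w + sh) = \<alpha> * J w" for w unfolding J_def \<alpha>_def by (rule J_quasi)
  have Jmq: "Jm (w + sh) = \<beta> * Jm w" for w unfolding Jm_def \<beta>_def by (rule J_quasi)
  have Sq: "S (w + sh) = \<alpha> * S w" for w
    unfolding S_def sum_distrib_left
  proof (rule sum.cong[OF refl])
    fix m assume "m \<in> {..<p}"
    have e: "\<nu> - 2 * of_nat p + 2 * of_nat m = \<nu> + of_int (2 * int m - 2 * int p)" by simp
    show "(-1) ^ m * exp ((\<nu> - 2 * of_nat p + 2 * of_nat m) * (w + sh))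
        / (2 ^ (2 * m + 2) * pochhammer (- of_nat p) (m + 1) * pochhammer (\<nu> - of_nat p) (m + 1)) =
        \<alpha> * ((-1) ^ m * exp ((\<nu> - 2 * of_nat p + 2 * of_nat m) * w)
        / (2 ^ (2 * m + 2) * pochhammer (- of_nat p) (m + 1) * pochhammer (\<nu> - of_nat p) (m + 1)))"
      unfolding e exp_shift \<alpha>_def by simp
  qed
  have Eq: "exp (\<nu> * (w + sh)) = \<alpha> * exp (\<nu> * w)" for w
    unfolding \<alpha>_def by (simp add: algebra_simps exp_add)
  have Qq: "Q (w + sh) = \<alpha> * Q w" for w
    unfolding Q_def Sq Jq Eq xx_sh by (simp add: algebra_simps)
  note combo = quasi_combo[of "lommel p \<nu>", OF Feq Qq Jq Jmq]
  have cc0: "cc \<noteq> 0"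
  proof -
    have "pochhammer (1 - \<nu>) p \<noteq> 0"
    proof
      assume "pochhammer (1 - \<nu>) p = 0"
      then obtain k where "1 - \<nu> = - of_nat k" by (auto simp: pochhammer_eq_0_iff)
      hence "\<nu> = of_int (int k + 1)" by (simp add: algebra_simps)
      with nu show False by auto
    qed
    thus ?thesis by (simp add: cc_def)
  qed
  have G0: "Gamma \<nu> \<noteq> 0" using nu by (auto simp: Gamma_eq_zero_iff dest: nonpos_Ints_Int)
  have c10: "c1 \<noteq> 0" using cc0 G0 by (simp add: c1_def)
  have rG: "rGamma (\<nu> + 1) \<noteq> 0"
  proof
    assume "rGamma (\<nu> + 1) = 0"
    hence "\<nu> + 1 \<in> \<int>" by (auto simp: rGamma_eq_zero_iff dest: nonpos_Ints_Int)
    hence "\<nu> + 1 - 1 \<in> \<int>" by (intro Ints_diff) auto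
    with nu show False by simp
  qed
  have sh0: "sh \<noteq> 0" by simp
  have Jrep: "J w = exp (- \<nu> * of_real (ln 2)) * exp (\<nu> * w) * PS (qJ \<nu>) (exp (2 * (w - of_real (ln 2))))" for w
    unfolding J_def J_repr xx_def by (simp add: algebra_simps flip: exp_add)
  have contF: "continuous_on UNIV (lommel p \<nu>)"
  proof -
    have cJ: "continuous_on UNIV J" "continuous_on UNIV Jm" unfolding J_def Jm_def by (rule J_cont)+
    have "continuous_on UNIV (\<lambda>w. Q w + c1 * w * J w + c2 * Jm w)"
      unfolding Q_def S_def
      by (intro cont_div_const continuous_intros cJ PS_xx_cont ent_qA)
    thus ?thesis using Feq by (simp add: fun_eq_iff)
  qed
  show ?thesis
  proof (cases "\<alpha> = \<beta>")
    case True
    show ?thesis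
    proof (rule main_abstract[OF contF M _ ent_qJ _ qJ_low[OF rG], where C = "c1 * sh * \<alpha> * exp (- \<nu> * of_real (ln 2))"
          and \<gamma> = \<nu> and a = 0 and b = 1 and d = "-\<alpha>"])
      show "c1 * sh * \<alpha> * exp (- \<nu> * of_real (ln 2)) \<noteq> 0" using c10 by (simp add: \<alpha>_def)
      show "0 < 1 / cmod (rGamma (\<nu> + 1))" using rG by simp
      fix w
      show "c1 * sh * \<alpha> * exp (- \<nu> * of_real (ln 2)) * exp (\<nu> * w) * PS (qJ \<nu>) (exp (2 * (w - of_real (ln 2)))) =
          0 * lommel p \<nu> (w + 4 * of_real pi * \<i>) + 1 * lommel p \<nu> (w + sh) + - \<alpha> * lommel p \<nu> w"
        using combo(2)[OF True, of w] Jrep[of w] by (simp add: algebra_simps)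
    qed
  next
    case False
    show ?thesis
    proof (rule main_abstract[OF contF M _ ent_qJ _ qJ_low[OF rG], where C = "c1 * sh * \<alpha> * (\<alpha> - \<beta>) * exp (- \<nu> * of_real (ln 2))"
          and \<gamma> = \<nu> and a = 1 and b = "-(\<alpha> + \<beta>)" and d = "\<alpha> * \<beta>"])
      show "c1 * sh * \<alpha> * (\<alpha> - \<beta>) * exp (- \<nu> * of_real (ln 2)) \<noteq> 0" using c10 False by (simp add: \<alpha>_def)
      show "0 < 1 / cmod (rGamma (\<nu> + 1))" using rG by simp
      fix w
      show "c1 * sh * \<alpha> * (\<alpha> - \<beta>) * exp (- \<nu> * of_real (ln 2)) * exp (\<nu> * w) * PS (qJ \<nu>) (exp (2 * (w - of_real (ln 2)))) =
          1 * lommel p \<nu> (w + 4 * of_real pi * \<i>) + - (\<alpha> + \<beta>) * lommel p \<nu> (w + sh) + \<alpha> * \<beta> * lommel p \<nu> w"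
        using combo(1)[of w] Jrep[of w] by (simp add: algebra_simps)
    qed
  qed
qed

lemma xx_deriv: "(xx has_field_derivative (2 * xx w)) (at w)"
  unfolding xx_def by (auto intro!: derivative_eq_intros)

lemma PS_xx_deriv:
  assumes "ent c"
  shows "((\<lambda>w. K * PS c (xx w)) has_field_derivative (K * (PS (diffs c) (xx w) * (2 * xx w)))) (at w)"
  by (intro DERIV_cmult DERIV_chain2[OF PS_deriv[OF assms] xx_deriv])

lemma PS_xx_holo: "ent c \<Longrightarrow> (\<lambda>w. K * PS c (xx w)) holomorphic_on S"
  using PS_xx_deriv unfolding holomorphic_on_def field_differentiable_def
  by (meson has_field_derivative_at_within)

lemma exp_m2ln2: "exp (- 2 * of_real (ln 2)) = (1/4 :: complex)"
proof -
  have e2: "exp (2 * ln (2::real)) = 4"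
  proof -
    have "exp (2 * ln (2::real)) = exp (ln 2 + ln 2)" by (simp only: mult_2)
    also have "\<dots> = exp (ln 2) * exp (ln (2::real))" by (rule exp_add)
    also have "\<dots> = 4" by simp
    finally show ?thesis .
  qed
  have e: "- 2 * of_real (ln 2) = (of_real (- (2 * ln 2)) :: complex)" by (simp only: of_real_minus of_real_mult of_real_numeral mult_minus_left)
  have "exp (- 2 * of_real (ln 2) :: complex) = of_real (exp (- (2 * ln 2)))" unfolding e by (rule exp_of_real)
  also have "exp (- (2 * ln 2) :: real) = inverse (exp (2 * ln 2))" by (rule exp_minus)
  also have "\<dots> = inverse 4" by (simp only: e2)
  finally show ?thesis by simp
qed

lemma exp_m2ln2': "exp (- (2 * of_real (ln 2))) = (1/4 :: complex)"
  using exp_m2ln2 by simp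

lemma dz_PS:
  assumes "ent c"
  shows "dzeta2 (\<lambda>w. K * PS c (xx w)) = (\<lambda>w. (K/4) * PS (diffs c) (xx w))"
proof
  fix w
  have "deriv (\<lambda>w. K * PS c (xx w)) w = K * (PS (diffs c) (xx w) * (2 * xx w))"
    by (rule DERIV_imp_deriv[OF PS_xx_deriv[OF assms]])
  moreover have "exp (- 2 * w) * xx w = 1/4"
    proof -
    have "exp (- 2 * w) * xx w = exp (- 2 * w + 2 * (w - of_real (ln 2)))" unfolding xx_def by (rule exp_add[symmetric])
    also have "- 2 * w + 2 * (w - of_real (ln 2)) = - 2 * of_real (ln 2)" by (simp add: algebra_simps)
    finally have "exp (- 2 * w) * xx w = exp (- 2 * of_real (ln 2))" .
    thus ?thesis by (simp add: exp_m2ln2 exp_m2ln2')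
  qed
  ultimately show "dzeta2 (\<lambda>w. K * PS c (xx w)) w = (K/4) * PS (diffs c) (xx w)"
    unfolding dzeta2_def by (simp add: algebra_simps)
qed

lemma dz_PS_iter:
  assumes "ent c"
  shows "(dzeta2 ^^ k) (\<lambda>w. K * PS c (xx w)) = (\<lambda>w. (K/4^k) * PS ((diffs ^^ k) c) (xx w))"
proof (induction k)
  case 0 thus ?case by simp
next
  case (Suc k)
  have "(dzeta2 ^^ Suc k) (\<lambda>w. K * PS c (xx w)) = dzeta2 (\<lambda>w. (K/4^k) * PS ((diffs ^^ k) c) (xx w))"
    using Suc by simp
  also have "\<dots> = (\<lambda>w. (K/4^k/4) * PS (diffs ((diffs ^^ k) c)) (xx w))"
    by (rule dz_PS[OF ent_diffs_iter[OF assms]])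
  finally show ?case by (simp add: algebra_simps)
qed

lemma dz_holo: "g holomorphic_on UNIV \<Longrightarrow> dzeta2 g holomorphic_on UNIV"
  unfolding dzeta2_def by (intro holomorphic_intros) auto

lemma dz_iter_holo: "g holomorphic_on UNIV \<Longrightarrow> (dzeta2 ^^ k) g holomorphic_on UNIV"
  by (induction k) (simp_all add: dz_holo)

definition D2 :: "(complex \<Rightarrow> complex) \<Rightarrow> complex \<Rightarrow> complex" where
  "D2 g = (\<lambda>w. g (w + 4 * of_real pi * \<i>) - 2 * g (w + sh) + g w)"

lemma shift_deriv:
  assumes "g holomorphic_on UNIV"
  shows "((\<lambda>w. g (w + s)) has_field_derivative deriv g (w + s)) (at w)"
proof -
  have "(g has_field_derivative deriv g (w + s)) (at (w + s))"
    using holomorphic_derivI[OF assms] by auto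
  hence "((\<lambda>w. g (w + s)) has_field_derivative deriv g (w + s) * 1) (at w)"
    by (rule DERIV_chain2[where g = "\<lambda>w. w + s"]) (auto intro!: derivative_eq_intros)
  thus ?thesis by simp
qed

lemma exp_m2_shift: "exp (- 2 * (w + sh)) = exp (- 2 * w)" "exp (- 2 * (w + 4 * of_real pi * \<i>)) = exp (- 2 * w)"
proof -
  have "- 2 * (w + sh) = - 2 * w + of_int (-2) * sh" by (simp add: algebra_simps)
  thus "exp (- 2 * (w + sh)) = exp (- 2 * w)" by (simp only: exp_add exp_int_sh) simp
  have "- 2 * (w + 4 * of_real pi * \<i>) = - 2 * w + of_int (-4) * sh" by (simp add: algebra_simps)
  thus "exp (- 2 * (w + 4 * of_real pi * \<i>)) = exp (- 2 * w)" by (simp only: exp_add exp_int_sh) simp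
qed

lemma lin3: "(E::complex) * (a - 2 * b + c) = E * a - 2 * (E * b) + E * c"
  by (simp add: algebra_simps)

lemma dz_D2:
  assumes "g holomorphic_on UNIV"
  shows "dzeta2 (D2 g) = D2 (dzeta2 g)"
proof
  fix w
  have "(D2 g has_field_derivative (deriv g (w + 4 * of_real pi * \<i>) - 2 * deriv g (w + sh) + deriv g (w + 0))) (at w)"
    unfolding D2_def
    using shift_deriv[OF assms, of "4 * of_real pi * \<i>" w] shift_deriv[OF assms, of sh w] shift_deriv[OF assms, of 0 w]
    by (auto intro!: derivative_eq_intros)
  hence ed: "deriv (D2 g) w = deriv g (w + 4 * of_real pi * \<i>) - 2 * deriv g (w + sh) + deriv g w"
    by (simp add: DERIV_imp_deriv)
  have L: "dzeta2 (D2 g) w = exp (- 2 * w) / 2 * (deriv g (w + 4 * of_real pi * \<i>) - 2 * deriv g (w + sh) + deriv g w)"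
    by (simp only: dzeta2_def ed)
  have R: "D2 (dzeta2 g) w = exp (- 2 * (w + 4 * of_real pi * \<i>)) / 2 * deriv g (w + 4 * of_real pi * \<i>)
      - 2 * (exp (- 2 * (w + sh)) / 2 * deriv g (w + sh)) + exp (- 2 * w) / 2 * deriv g w"
    by (simp only: D2_def dzeta2_def)
  show "dzeta2 (D2 g) w = D2 (dzeta2 g) w"
    unfolding L R exp_m2_shift by (rule lin3)
qed

lemma dz_D2_iter:
  assumes "g holomorphic_on UNIV"
  shows "(dzeta2 ^^ k) (D2 g) = D2 ((dzeta2 ^^ k) g)"
proof (induction k)
  case (Suc k)
  have "(dzeta2 ^^ Suc k) (D2 g) = dzeta2 ((dzeta2 ^^ k) (D2 g))" by (simp only: funpow.simps comp_def)
  also have "\<dots> = dzeta2 (D2 ((dzeta2 ^^ k) g))" by (simp only: Suc.IH)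
  also have "\<dots> = D2 (dzeta2 ((dzeta2 ^^ k) g))" by (rule dz_D2[OF dz_iter_holo[OF assms, of k]])
  also have "\<dots> = D2 ((dzeta2 ^^ Suc k) g)" by (simp only: funpow.simps comp_def)
  finally show ?case .
qed (simp only: funpow.simps id_def)

definition d0 :: "nat \<Rightarrow> complex" where "d0 m = (-1)^m / (fact m)^2"
definition d1 :: "nat \<Rightarrow> complex" where "d1 m = d0 m * Digamma (of_nat m + 1)"
definition d2 :: "nat \<Rightarrow> complex" where
  "d2 m = d0 m * (Digamma (of_nat m + 1)^2 - Polygamma 1 (of_nat m + 1) / 2 + of_real pi ^ 2 / 4)"

lemma norm_d0: "norm (d0 m) = 1 / (fact m)^2"
  by (simp add: d0_def norm_divide norm_power)

lemma norm_d0_le: "norm (d0 m) \<le> 1 / fact m"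
proof -
  have "(fact m :: real) \<le> (fact m)^2" by (simp add: power2_eq_square)
  thus ?thesis unfolding norm_d0 by (intro divide_left_mono) auto
qed

lemma ent_d0: "ent d0"
  by (rule ent_bound[where K = 1 and B = 1]) (auto intro: always_eventually norm_d0_le)

lemma Dg_bound: "\<exists>D. \<forall>\<^sub>F m in sequentially. norm (Digamma (of_nat m + 1 :: complex)) \<le> D * 2^m"
  using lin_growth[of Digamma 0, OF Digamma_step] by simp

lemma Pg_bound: "\<exists>D. \<forall>\<^sub>F m in sequentially. norm (Polygamma 1 (of_nat m + 1 :: complex)) \<le> D * 2^m"
  using lin_growth[of "Polygamma 1" 0, OF Polygamma1_step] by simp

lemma ent_d1: "ent d1"
proof -
  obtain D where D: "\<forall>\<^sub>F m in sequentially. norm (Digamma (of_nat m + 1 :: complex)) \<le> D * 2^m"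
    using Dg_bound by blast
  show ?thesis
  proof (rule ent_bound[where K = D and B = 2])
    show "\<forall>\<^sub>F m in sequentially. norm (d1 m) \<le> D * 2^m / fact m" using D
    proof eventually_elim
      case (elim m)
      have "norm (d1 m) = norm (d0 m) * norm (Digamma (of_nat m + 1 :: complex))" by (simp add: d1_def norm_mult)
      also have "\<dots> \<le> (1 / fact m) * (D * 2^m)"
        using elim norm_d0_le by (intro mult_mono) auto
      finally show ?case by simp
    qed
  qed simp
qed

lemma ent_d2: "ent d2"
proof -
  obtain D where D: "\<forall>\<^sub>F m in sequentially. norm (Digamma (of_nat m + 1 :: complex)) \<le> D * 2^m"
    using Dg_bound by blast
  obtain D' where D': "\<forall>\<^sub>F m in sequentially. norm (Polygamma 1 (of_nat m + 1 :: complex)) \<le> D' * 2^m"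
    using Pg_bound by blast
  define E where "E = D^2 + D' / 2 + pi^2/4"
  show ?thesis
  proof (rule ent_bound[where K = E and B = 4])
    show "\<forall>\<^sub>F m in sequentially. norm (d2 m) \<le> E * 4^m / fact m" using D D'
    proof eventually_elim
      case (elim m)
      have p4: "(2::real)^m \<le> 4^m" by (intro power_mono) auto
      have p1: "(1::real) \<le> 4^m" by simp
      have dpos: "0 \<le> D * 2^m" using elim(1) norm_ge_zero order_trans by blast
      have d'pos: "0 \<le> D' * 2^m" using elim(2) norm_ge_zero order_trans by blast
      have "norm (Digamma (of_nat m + 1 :: complex)^2) \<le> (D * 2^m)^2"
        unfolding norm_power using elim(1) by (intro power_mono) auto
      also have "\<dots> = D^2 * 4^m" by (simp add: power_mult_distrib power_mult[symmetric] mult.commute[of m 2] power_mult)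
      finally have a: "norm (Digamma (of_nat m + 1 :: complex)^2) \<le> D^2 * 4^m" .
      have "norm (Polygamma 1 (of_nat m + 1 :: complex) / 2) \<le> D' * 2^m / 2" using elim(2) by (simp add: norm_divide)
      also have "\<dots> \<le> D' / 2 * 4^m"
      proof -
        have pos: "(0::real) < 2^m" by simp
        have "D' \<ge> 0" using divide_nonneg_pos[OF d'pos pos] pos by simp
        thus ?thesis using p4 by (simp add: mult_left_mono)
      qed
      finally have b: "norm (Polygamma 1 (of_nat m + 1 :: complex) / 2) \<le> D' / 2 * 4^m" .
      have c: "norm (of_real pi ^ 2 / 4 :: complex) \<le> pi^2/4 * 4^m"
        using p1 by (simp add: norm_power norm_divide)
      have "norm (Digamma (of_nat m + 1 :: complex)^2 - Polygamma 1 (of_nat m + 1) / 2 + of_real pi ^ 2 / 4)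
          \<le> norm (Digamma (of_nat m + 1 :: complex)^2) + norm (Polygamma 1 (of_nat m + 1 :: complex) / 2)
             + norm (of_real pi ^ 2 / 4 :: complex)"
        using norm_triangle_ineq[of "Digamma (of_nat m + 1 :: complex)^2 - Polygamma 1 (of_nat m + 1) / 2" "of_real pi ^ 2 / 4"]
          norm_triangle_ineq4[of "Digamma (of_nat m + 1 :: complex)^2" "Polygamma 1 (of_nat m + 1) / 2"] by linarith
      also have "\<dots> \<le> E * 4^m" using a b c by (simp add: E_def algebra_simps)
      finally have X: "norm (Digamma (of_nat m + 1 :: complex)^2 - Polygamma 1 (of_nat m + 1) / 2 + of_real pi ^ 2 / 4) \<le> E * 4^m" .
      have "norm (d2 m) = norm (d0 m) * norm (Digamma (of_nat m + 1 :: complex)^2 - Polygamma 1 (of_nat m + 1) / 2 + of_real pi ^ 2 / 4)"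
        by (simp add: d2_def norm_mult)
      also have "\<dots> \<le> (1 / fact m) * (E * 4^m)"
        using X norm_d0_le by (intro mult_mono) auto
      finally show ?case by simp
    qed
  qed simp
qed

lemma xx_pow: "exp (2 * of_nat m * (w - of_real (ln 2))) = xx w ^ m"
proof -
  have "2 * of_nat m * (w - of_real (ln 2)) = of_nat m * (2 * (w - of_real (ln 2)))" by (simp add: algebra_simps)
  thus ?thesis unfolding xx_def by (simp only: exp_of_nat_mult)
qed

lemma ring_aux: "(a::complex) ^2 * (t * x) - 2 * a * (t * b * x) + t * (b^2 - P + R) * x = t * x * ((a - b)^2 - P + R)"
  by (simp add: algebra_simps power2_eq_square)

lemma S00_repr: "lommel_S00 w = 1/2 * ((w - of_real (ln 2))^2 * PS d0 (xx w)
     - 2 * (w - of_real (ln 2)) * PS d1 (xx w) + PS d2 (xx w))"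
proof -
  define v where "v = w - of_real (ln 2)"
  have s0: "(\<lambda>m. d0 m * xx w ^ m) sums PS d0 (xx w)" using ent_d0 unfolding ent_def PS_def by (simp add: summable_sums)
  have s1: "(\<lambda>m. d1 m * xx w ^ m) sums PS d1 (xx w)" using ent_d1 unfolding ent_def PS_def by (simp add: summable_sums)
  have s2: "(\<lambda>m. d2 m * xx w ^ m) sums PS d2 (xx w)" using ent_d2 unfolding ent_def PS_def by (simp add: summable_sums)
  have "(\<lambda>m. v^2 * (d0 m * xx w ^ m) - 2 * v * (d1 m * xx w ^ m) + d2 m * xx w ^ m) sums
        (v^2 * PS d0 (xx w) - 2 * v * PS d1 (xx w) + PS d2 (xx w))"
    by (intro sums_add sums_diff sums_mult s0 s1 s2)
  moreover have "(\<lambda>m. v^2 * (d0 m * xx w ^ m) - 2 * v * (d1 m * xx w ^ m) + d2 m * xx w ^ m) =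
     (\<lambda>m. d0 m * xx w ^ m * ((v - Digamma (of_nat m + 1))^2 - Polygamma 1 (of_nat m + 1) / 2 + of_real pi ^ 2 / 4))"
    unfolding d2_def d1_def by (simp only: ring_aux)
  moreover have "(\<lambda>m. d0 m * xx w ^ m * ((v - Digamma (of_nat m + 1))^2 - Polygamma 1 (of_nat m + 1) / 2 + of_real pi ^ 2 / 4)) =
     (\<lambda>m. (-1) ^ m * exp (2 * of_nat m * (w - of_real (ln 2))) / (of_nat (fact m))^2 *
        ((w - of_real (ln 2) - Digamma (of_nat m + 1))^2 - Polygamma 1 (of_nat m + 1) / 2
          + of_real pi ^ 2 / 4))"
    unfolding xx_pow v_def d0_def by (simp add: fun_eq_iff)
  ultimately show ?thesis unfolding lommel_S00_def v_def by (simp add: sums_iff)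
qed

lemma PS_xx_holo1: "ent c \<Longrightarrow> (\<lambda>w. PS c (xx w)) holomorphic_on S"
  using PS_xx_holo[of c 1] by simp

lemma S00_holo: "lommel_S00 holomorphic_on UNIV"
proof -
  have "(\<lambda>w. 1/2 * ((w - of_real (ln 2))^2 * PS d0 (xx w)
     - 2 * (w - of_real (ln 2)) * PS d1 (xx w) + PS d2 (xx w))) holomorphic_on UNIV"
    by (intro holomorphic_intros PS_xx_holo1 ent_d0 ent_d1 ent_d2)
  moreover have "lommel_S00 = (\<lambda>w. 1/2 * ((w - of_real (ln 2))^2 * PS d0 (xx w)
     - 2 * (w - of_real (ln 2)) * PS d1 (xx w) + PS d2 (xx w)))" by (rule ext, rule S00_repr)
  ultimately show ?thesis by simp
qed

lemma xx_sh2: "xx (w + 4 * of_real pi * \<i>) = xx w"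
proof -
  have "w + 4 * of_real pi * \<i> = (w + sh) + sh" by simp
  thus ?thesis by (simp only: xx_sh)
qed

lemma D2_S00: "D2 lommel_S00 = (\<lambda>w. sh^2 * PS d0 (xx w))"
proof
  fix w
  show "D2 lommel_S00 w = sh^2 * PS d0 (xx w)"
    unfolding D2_def S00_repr xx_sh xx_sh2 by (simp add: algebra_simps power2_eq_square)
qed

lemma D2H: "D2 ((dzeta2 ^^ n) lommel_S00) = (\<lambda>w. (sh^2 / 4^n) * PS ((diffs ^^ n) d0) (xx w))"
  using dz_D2_iter[OF S00_holo, of n] D2_S00 dz_PS_iter[OF ent_d0, of n "sh^2"] by simp

lemma D2_combo:
  fixes F P E H :: "complex \<Rightarrow> complex"
  assumes F: "\<And>w. F w = P w + k * E w * H w" and P: "\<And>w. P (w + sh) = P w" and E: "\<And>w. E (w + sh) = E w"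
  shows "F (w + 4 * of_real pi * \<i>) - 2 * F (w + sh) + F w = k * E w * D2 H w"
proof -
  have e: "w + 4 * of_real pi * \<i> = (w + sh) + sh" by simp
  show ?thesis unfolding D2_def F e P E by (simp add: algebra_simps)
qed

lemma exp_int_per: "exp (of_int k * (w + sh)) = exp (of_int k * w)"
proof -
  have "of_int k * (w + sh) = of_int k * w + of_int k * sh" by (simp add: algebra_simps)
  thus ?thesis by (simp only: exp_add exp_int_sh) simp
qed

lemma qlow_d0: "norm ((diffs ^^ n) d0 m) \<ge> 1 / (1 * (fact (m + n))^2)"
proof -
  have e: "(diffs ^^ n) d0 m * fact m = fact (m+n) * d0 (m+n)" by (rule diffs_iter_val)
  hence "norm ((diffs ^^ n) d0 m) * fact m = fact (m+n) * (1 / (fact (m+n))^2)"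
    by (metis norm_d0 norm_fact norm_mult)
  hence "norm ((diffs ^^ n) d0 m) * fact m = 1 / fact (m+n)" by (simp add: power2_eq_square)
  hence q: "norm ((diffs ^^ n) d0 m) = 1 / (fact m * fact (m+n))" by (simp add: field_simps)
  have fm: "(fact m :: real) \<le> fact (m+n)" by (intro fact_mono) auto
  have "fact m * fact (m+n) \<le> fact (m+n) * (fact (m+n) :: real)" by (rule mult_right_mono[OF fm]) simp
  hence "fact m * fact (m+n) \<le> ((fact (m+n))^2 :: real)" by (simp add: power2_eq_square)
  hence "1 / (fact (m+n))^2 \<le> 1 / (fact m * fact (m+n) :: real)"
    by (intro divide_left_mono) auto
  thus ?thesis using q by simp
qed

lemma negint_case:
  fixes M c0 :: complex
  assumes M: "M \<noteq> 0"
  shows "\<not> subnormal (\<lambda>z. lommel_gen p (- of_nat n) (c0 + M*z))"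
proof -
  define H where "H = (dzeta2 ^^ n) lommel_S00"
  define S where "S = (\<lambda>w. \<Sum>m<p. (-1) ^ m * exp ((- of_nat n - 2 * of_nat p + 2 * of_nat m) * w)
        / (2 ^ (2 * m + 2) * pochhammer (- of_nat p) (m + 1) * pochhammer (- of_nat n - of_nat p) (m + 1) :: complex))"
  define cc where "cc = (-1) ^ p / (2 ^ (2 * p) * of_nat (fact p) * pochhammer (1 - (- of_nat n)) p :: complex)"
  define k where "k = cc * (-1)^n / of_nat (fact n)"
  have S1: "lommel_S1 (- of_nat n) w = lommel_S1_negint n w" for w
    unfolding lommel_S1_def by (auto simp: floor_minus)
  have Feq: "lommel_gen p (- of_nat n) w = S w + k * exp (of_nat n * w) * H w" for w
    unfolding lommel_gen_def S1 lommel_S1_negint_def S_def k_def cc_def H_def by (simp add: ac_simps)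
  have Sp: "S (w + sh) = S w" for w
    unfolding S_def
  proof (rule sum.cong[OF refl])
    fix m assume "m \<in> {..<p}"
    have e: "(- of_nat n - 2 * of_nat p + 2 * of_nat m :: complex) = of_int (2 * int m - 2 * int p - int n)" by simp
    show "(-1) ^ m * exp ((- of_nat n - 2 * of_nat p + 2 * of_nat m) * (w + sh))
        / (2 ^ (2 * m + 2) * pochhammer (- of_nat p) (m + 1) * pochhammer (- of_nat n - of_nat p) (m + 1)) =
        (-1) ^ m * exp ((- of_nat n - 2 * of_nat p + 2 * of_nat m) * w)
        / (2 ^ (2 * m + 2) * pochhammer (- of_nat p) (m + 1) * pochhammer (- of_nat n - of_nat p) (m + 1) :: complex)"
      unfolding e exp_int_per by (rule refl)
  qed
  have Ep: "exp (of_nat n * (w + sh)) = exp (of_nat n * w)" for w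
    using exp_int_per[of "int n" w] by simp
  have comb: "lommel_gen p (- of_nat n) (w + 4 * of_real pi * \<i>) - 2 * lommel_gen p (- of_nat n) (w + sh)
       + lommel_gen p (- of_nat n) w = k * exp (of_nat n * w) * D2 H w" for w
    by (rule D2_combo[where E = "\<lambda>w. exp (of_nat n * w)", OF Feq Sp Ep])
  have cc0: "cc \<noteq> 0"
  proof -
    have "pochhammer (1 - (- of_nat n)) p \<noteq> (0::complex)"
    proof
      assume "pochhammer (1 - (- of_nat n)) p = (0::complex)"
      then obtain j where "1 - (- of_nat n) = (- of_nat j :: complex)" by (auto simp: pochhammer_eq_0_iff)
      hence "(1 + of_nat n) + of_nat j = (0::complex)" by (simp add: eq_neg_iff_add_eq_0)
      hence "of_nat (1 + n + j) = (0::complex)" by (simp add: add.assoc)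
      thus False by (simp only: of_nat_eq_0_iff)
    qed
    thus ?thesis by (simp add: cc_def)
  qed
  have k0: "k \<noteq> 0" using cc0 by (simp add: k_def)
  have Hholo: "H holomorphic_on UNIV" unfolding H_def by (rule dz_iter_holo[OF S00_holo])
  have contF: "continuous_on UNIV (lommel_gen p (- of_nat n))"
  proof -
    have cH: "continuous_on UNIV H" using Hholo by (rule holomorphic_on_imp_continuous_on)
    have "continuous_on UNIV (\<lambda>w. S w + k * exp (of_nat n * w) * H w)"
      unfolding S_def by (intro cont_div_const continuous_intros cH)
    thus ?thesis using Feq by (simp add: fun_eq_iff)
  qed
  show ?thesis
  proof (rule main_abstract[OF contF M _ ent_diffs_iter[OF ent_d0] _ qlow_d0,
        where C = "k * (sh^2 / 4^n)" and \<gamma> = "of_nat n" and a = 1 and b = "-2" and d = 1])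
    show "k * (sh^2 / 4^n) \<noteq> 0" using k0 by simp
    show "(0::real) < 1" by simp
    fix w
    show "k * (sh^2 / 4^n) * exp (of_nat n * w) * PS ((diffs ^^ n) d0) (exp (2 * (w - of_real (ln 2)))) =
        1 * lommel_gen p (- of_nat n) (w + 4 * of_real pi * \<i>) + - 2 * lommel_gen p (- of_nat n) (w + sh) +
        1 * lommel_gen p (- of_nat n) w"
      using comb[of w] unfolding H_def D2H xx_def by (simp add: algebra_simps)
  qed
qed

theorem proposition4p4:
  fixes p :: nat and L M \<nu> :: complex
  assumes "L \<noteq> 0" and "M \<noteq> 0"
    and "\<nu> \<in> \<int> \<Longrightarrow> Re \<nu> \<le> of_nat p"
  shows "\<forall>k::int. \<not> subnormal (\<lambda>z. lommel p \<nu> (Ln L + 2 * of_real pi * \<i> * of_int k + M * z))"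
proof
  fix k :: int
  define c0 where "c0 = Ln L + 2 * of_real pi * \<i> * of_int k"
  have goal: "\<not> subnormal (\<lambda>z. lommel p \<nu> (c0 + M * z))"
  proof (cases "\<nu> \<in> \<int>")
    case False
    thus ?thesis using nonint_case[OF False assms(2)] by simp
  next
    case True
    then obtain j where j: "\<nu> = of_int j" by (auto elim: Ints_cases)
    have jp: "j \<le> int p" using assms(3)[OF True] j by simp
    show ?thesis
    proof (cases "j \<le> 0")
      case True
      define n where "n = nat (- j)"
      have nu: "\<nu> = - of_nat n" using True j by (simp add: n_def)
      have nk: "\<not> (\<exists>k::nat. 1 \<le> k \<and> k \<le> p \<and> \<nu> = of_nat k)"
      proof
        assume "\<exists>k::nat. 1 \<le> k \<and> k \<le> p \<and> \<nu> = of_nat k"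
        then obtain kk :: nat where "1 \<le> kk" "\<nu> = of_nat kk" by blast
        hence "of_int j = (of_nat kk :: complex)" using j by simp
        hence "j = int kk" by (metis of_int_eq_iff of_int_of_nat_eq)
        thus False using True \<open>1 \<le> kk\<close> by simp
      qed
      have "(\<lambda>z. lommel p \<nu> (c0 + M * z)) = (\<lambda>z. lommel_gen p (- of_nat n) (c0 + M * z))"
        unfolding lommel_def by (subst if_not_P[OF nk]) (simp only: nu)
      thus ?thesis using negint_case[OF assms(2), of p n c0] by simp
    next
      case False
      define kk where "kk = nat j"
      have nu: "\<nu> = of_nat kk" using False j by (simp add: kk_def)
      have kk: "1 \<le> kk" "kk \<le> p" using False jp by (auto simp: kk_def)
      have fl: "nat \<lfloor>Re \<nu>\<rfloor> = kk" using nu by simp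
      have "(\<lambda>z. lommel p \<nu> (c0 + M * z)) = (\<lambda>z. lommel_gen (p - kk) (- of_nat kk) (c0 + M * z))"
        unfolding lommel_def using kk nu fl by auto
      thus ?thesis using negint_case[OF assms(2), of "p - kk" kk c0] by simp
    qed
  qed
  thus "\<not> subnormal (\<lambda>z. lommel p \<nu> (Ln L + 2 * of_real pi * \<i> * of_int k + M * z))"
    by (simp add: c0_def)
qed

end
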